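(* Let $R>0$ and let $(m,n)$, $(m',n')$ be integer points on the ellipse $X^2+XY+Y^2=R^2$ with $1\le m<m'\le n'<n$. Then $F_R(m,n)>F_R(m',n')$, and, as $R\to\infty$, $$F_R(m,n)-F_R(m',n')\gg\frac1{m^4},$$ with an absolute implied constant.
   Context: For integers $m,n\ge1$ with $m^2+mn+n^2=R^2$, $F_R(m,n)=\frac{R^4}{m^2n^2(m+n)^2}=\frac1{m^2}+\frac1{n^2}+\frac1{(m+n)^2}$. *)

theory Defs
  imports Complex_Main
begin

definition F :: "real \<Rightarrow> int \<Rightarrow> int \<Rightarrow> real" where
  "F R m n = R ^ 4 / (real_of_int m ^ 2 * real_of_int n ^ 2 * real_of_int (m + n) ^ 2)"

end

theory Submission
  imports Defs
begin

lemma Fform: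
  fixes R :: real and m n :: int
  assumes "m \<ge> 1" "n \<ge> 1" "real_of_int (m^2 + m*n + n^2) = R^2"
  shows "F R m n = 1/(real_of_int m)^2 + 1/(real_of_int n)^2 + 1/(real_of_int m + real_of_int n)^2"
proof -
  define a where "a = real_of_int m"
  define c where "c = real_of_int n"
  have a: "a \<ge> 1" "c \<ge> 1" using assms by (auto simp: a_def c_def)
  have R4: "R^4 = (a^2+a*c+c^2)^2" using assms(3)
    by (simp add: a_def c_def power_mult[symmetric, of R 2 2, simplified] )
  have "F R m n = (a^2+a*c+c^2)^2 / (a^2*c^2*(a+c)^2)"
    unfolding F_def using R4 by (simp add: a_def c_def)
  also have "\<dots> = (c^2*(a+c)^2 + a^2*(a+c)^2 + a^2*c^2) / (a^2*c^2*(a+c)^2)"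
    by (rule arg_cong[where f="\<lambda>x. x / _"]) algebra
  also have "\<dots> = 1/a^2 + 1/c^2 + 1/(a+c)^2" using a
    by (simp add: add_divide_distrib)
  finally show ?thesis by (simp add: a_def c_def)
qed

lemma ndiff:
  fixes m n m' n' :: int
  assumes "m^2 + m*n + n^2 = m'^2 + m'*n' + n'^2" "1 \<le> m" "m < m'" "m' \<le> n'" "n' < n"
  shows "n - n' \<le> m' - m"
proof -
  have e: "(n-n')*(n+n'+m) = (m'-m)*(m'+m+n')" using assms(1) by (simp add: algebra_simps power2_eq_square)
  have "(m'-m)*(m'+m+n') \<le> (m'-m)*(n+n'+m)" using assms by (intro mult_left_mono) auto
  hence "(n-n')*(n+n'+m) \<le> (m'-m)*(n+n'+m)" using e by simp
  thus ?thesis using assms by (simp add: mult_le_cancel_right)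
qed

lemma key:
  fixes a b c d k :: real
  assumes "1 \<le> a" "a + 1 \<le> b" "b \<le> d" "d < c" "c - d \<le> b - a"
  shows "(1/a^2 + 1/c^2 + 1/(a+c)^2) - (1/b^2 + 1/d^2 + 1/(b+d)^2) \<ge> 1/(4*a^4)"
proof -
  have t3: "1/(b+d)^2 \<le> 1/(a+c)^2"
    using assms by (intro divide_left_mono power_mono) auto
  have "1/d^2 - 1/c^2 = (c-d)*(c+d)/(c^2*d^2)" using assms by (simp add: field_simps power2_eq_square)
  also have "\<dots> \<le> (b-a)*(2*c)/(c^2*d^2)" using assms
    by (intro divide_right_mono mult_mono) auto
  also have "\<dots> = 2*(b-a)/(c*d^2)" using assms by (simp add: field_simps power2_eq_square)
  also have "\<dots> \<le> 2*(b-a)/b^3"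
  proof -
    have "b^3 = b*(b*b)" by (simp add: power3_eq_cube)
    also have "\<dots> \<le> c*(d*d)" using assms by (intro mult_mono) auto
    finally have "b^3 \<le> c*d^2" by (simp add: power2_eq_square)
    thus ?thesis using assms by (intro divide_left_mono) auto
  qed
  finally have t2: "1/d^2 - 1/c^2 \<le> 2*(b-a)/b^3" .
  have h1: "a*(b-a) \<ge> b/2"
  proof -
    have "0 \<le> (a-1/2)*(b-(a+1))" using assms by (intro mult_nonneg_nonneg) auto
    moreover have "(a-1/2)*(b-(a+1)) = a*(b-a) - b/2 - (a - 1)/2" by (simp add: field_simps)
    ultimately show ?thesis using assms by argo
  qed
  have h2: "4*a^2*(b-a)^2 \<ge> b^2"
  proof -
    have "b^2 = (2*(b/2))^2" by simp
    also have "\<dots> \<le> (2*(a*(b-a)))^2" using h1 assms by (intro power_mono) auto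
    finally show ?thesis by (simp add: power_mult_distrib)
  qed
  have h3: "4*a^2*(b-a)^2*(b+2*a) \<ge> b^3"
  proof -
    have "b^3 = b^2*b" by (simp add: power3_eq_cube power2_eq_square)
    also have "\<dots> \<le> (4*a^2*(b-a)^2)*(b+2*a)" using h2 assms by (intro mult_mono) auto
    finally show ?thesis by simp
  qed
  have t1: "1/a^2 - 1/b^2 - 2*(b-a)/b^3 \<ge> 1/(4*a^4)"
  proof -
    have "1/a^2 - 1/b^2 - 2*(b-a)/b^3 = (b-a)^2*(b+2*a)/(a^2*b^3)"
      using assms by (simp add: field_simps power2_eq_square power3_eq_cube)
    also have "(b-a)^2*(b+2*a)/(a^2*b^3) = ((4*a^2)*((b-a)^2*(b+2*a)))/((4*a^2)*(a^2*b^3))"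
      by (rule mult_divide_mult_cancel_left[symmetric]) (use assms in auto)
    also have "\<dots> \<ge> b^3/(4*a^2*(a^2*b^3))" using h3 assms
      by (intro divide_right_mono) (auto simp: mult.assoc)
    also have "b^3/(4*a^2*(a^2*b^3)) = 1/(4*a^4)" using assms
      by (simp add: power2_eq_square power4_eq_xxxx)
    finally show ?thesis .
  qed
  show ?thesis using t1 t2 t3 by linarith
qed


lemma gap:
  fixes R :: real and m n m' n' :: int
  assumes "real_of_int (m^2 + m*n + n^2) = R^2" "real_of_int (m'^2 + m'*n' + n'^2) = R^2"
    "1 \<le> m" "m < m'" "m' \<le> n'" "n' < n"
  shows "F R m n - F R m' n' \<ge> 1/(4*real_of_int m^4)"
proof -
  have e: "m^2 + m*n + n^2 = m'^2 + m'*n' + n'^2" using assms(1,2) by (metis of_int_eq_iff)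
  have nd: "n - n' \<le> m' - m" by (rule ndiff[OF e assms(3-6)])
  have f1: "F R m n = 1/(real_of_int m)^2 + 1/(real_of_int n)^2 + 1/(real_of_int m + real_of_int n)^2"
    using assms by (intro Fform) auto
  have f2: "F R m' n' = 1/(real_of_int m')^2 + 1/(real_of_int n')^2 + 1/(real_of_int m' + real_of_int n')^2"
    using assms by (intro Fform) auto
  have k: "(1/(real_of_int m)^2 + 1/(real_of_int n)^2 + 1/(real_of_int m + real_of_int n)^2)
     - (1/(real_of_int m')^2 + 1/(real_of_int n')^2 + 1/(real_of_int m' + real_of_int n')^2)
     \<ge> 1/(4*real_of_int m^4)"
  proof (rule key)
    show "1 \<le> real_of_int m" using assms by simp
    show "real_of_int m + 1 \<le> real_of_int m'" using assms by simp
    show "real_of_int m' \<le> real_of_int n'" using assms by simp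
    show "real_of_int n' < real_of_int n" using assms by simp
    show "real_of_int n - real_of_int n' \<le> real_of_int m' - real_of_int m"
      using nd by (metis of_int_diff of_int_le_iff)
  qed
  show ?thesis using k f1 f2 by simp
qed

theorem proposition7p2:
  shows "(\<forall>(R::real) (m::int) n m' n'.
            R > 0 \<and> real_of_int (m^2 + m*n + n^2) = R^2 \<and>
            real_of_int (m'^2 + m'*n' + n'^2) = R^2 \<and>
            1 \<le> m \<and> m < m' \<and> m' \<le> n' \<and> n' < n
            \<longrightarrow> F R m n > F R m' n')
      \<and> (\<exists>C>0. \<exists>R0::real. \<forall>(R::real) (m::int) n m' n'.
            R > R0 \<and> real_of_int (m^2 + m*n + n^2) = R^2 \<and>
            real_of_int (m'^2 + m'*n' + n'^2) = R^2 \<and>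
            1 \<le> m \<and> m < m' \<and> m' \<le> n' \<and> n' < n
            \<longrightarrow> F R m n - F R m' n' \<ge> C / real_of_int m ^ 4)"
proof (intro conjI allI impI)
  fix R :: real and m n m' n' :: int
  assume a: "R > 0 \<and> real_of_int (m^2 + m*n + n^2) = R^2 \<and>
            real_of_int (m'^2 + m'*n' + n'^2) = R^2 \<and>
            1 \<le> m \<and> m < m' \<and> m' \<le> n' \<and> n' < n"
  hence g: "F R m n - F R m' n' \<ge> 1/(4*real_of_int m^4)" by (intro gap) auto
  have "1/(4*real_of_int m^4) > 0" using a by simp
  thus "F R m n > F R m' n'" using g by linarith
next
  show "\<exists>C>0. \<exists>R0::real. \<forall>(R::real) (m::int) n m' n'.
            R > R0 \<and> real_of_int (m^2 + m*n + n^2) = R^2 \<and>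
            real_of_int (m'^2 + m'*n' + n'^2) = R^2 \<and>
            1 \<le> m \<and> m < m' \<and> m' \<le> n' \<and> n' < n
            \<longrightarrow> F R m n - F R m' n' \<ge> C / real_of_int m ^ 4"
  proof (rule exI[of _ "1/4"], rule conjI[OF _ exI[of _ 0]], simp, intro allI impI)
    fix R :: real and m n m' n' :: int
    assume a: "R > 0 \<and> real_of_int (m^2 + m*n + n^2) = R^2 \<and>
            real_of_int (m'^2 + m'*n' + n'^2) = R^2 \<and>
            1 \<le> m \<and> m < m' \<and> m' \<le> n' \<and> n' < n"
    hence g: "F R m n - F R m' n' \<ge> 1/(4*real_of_int m^4)" by (intro gap) auto
    thus "F R m n - F R m' n' \<ge> (1/4) / real_of_int m ^ 4" by simp
  qed
qed

end
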